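(* Let $i=\sqrt{-1}$, let $\alpha>0$, and let $\lambda\in\mathbb C$ satisfy $\Im\lambda\notin\{\alpha,-\alpha\}$. Define $u_0=\alpha i+\lambda$, $w_0=\alpha i-\lambda$, and for $h=0,1,\dots$ $$u_{h+1}=\tfrac12\left(u_h-1/u_h\right),\qquad w_{h+1}=\tfrac12\left(w_h-1/w_h\right).$$ Then all $u_h,w_h$ are well defined and nonzero, and $$\lim_{h\to\infty}(u_h+w_h)=\begin{cases}2i,& |\Im\lambda|<\alpha,\\ 0,& |\Im\lambda|>\alpha.\end{cases}$$ *)

theory Defs
  imports Complex_Main
begin

end

theory Submission
  imports Defs
begin

lemma im_step_pos:
  fixes z :: complex assumes "Im z > 0" shows "Im ((z - 1 / z) / 2) > 0"
proof -
  have z: "z \<noteq> 0" using assms by auto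
  have "(Re z)^2 + (Im z)^2 > 0" using assms by (simp add: add_nonneg_pos)
  hence "Im (1 / z) < 0" using assms by (simp add: Im_divide)
  thus ?thesis using assms by simp
qed

lemma newton_pos:
  fixes z :: "nat \<Rightarrow> complex"
  assumes step: "\<And>h. z (Suc h) = (z h - 1 / z h) / 2" and pos: "Im (z 0) > 0"
  shows "(\<forall>n. Im (z n) > 0) \<and> z \<longlonglongrightarrow> \<i>"
proof -
  have P: "\<And>n. Im (z n) > 0"
  proof -
    fix n show "Im (z n) > 0"
    proof (induction n)
      case 0 show ?case using pos by simp
    next
      case (Suc n) show ?case unfolding step using im_step_pos[OF Suc] .
    qed
  qed
  define q where "q n = (z n - \<i>) / (z n + \<i>)" for n
  have nz: "z n \<noteq> 0" "z n + \<i> \<noteq> 0" for n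
  proof -
    show "z n \<noteq> 0" using P[of n] by auto
    have "Im (z n + \<i>) > 0" using P[of n] by simp
    thus "z n + \<i> \<noteq> 0" by (metis less_irrefl zero_complex.simps(2))
  qed
  have qs: "q (Suc n) = (q n)^2" for n
  proof -
    have a: "z (Suc n) - \<i> = (z n - \<i>)^2 / (2 * z n)"
      using nz(1)[of n] by (simp add: step field_simps power2_eq_square algebra_simps)
    have b: "z (Suc n) + \<i> = (z n + \<i>)^2 / (2 * z n)"
      using nz(1)[of n] by (simp add: step field_simps power2_eq_square algebra_simps)
    have "q (Suc n) = (z n - \<i>)^2 / (z n + \<i>)^2"
      unfolding q_def a b using nz(1)[of n] by simp
    thus ?thesis unfolding q_def by (simp add: power_divide)
  qed
  have qp: "q n = q 0 ^ (2^n)" for n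
    by (induction n) (simp_all add: qs power_mult[symmetric] mult.commute)
  have q1: "norm (q 0) < 1"
  proof -
    have "cmod (z 0 - \<i>) ^ 2 < cmod (z 0 + \<i>) ^ 2"
      using pos unfolding cmod_power2 by (simp add: power2_eq_square algebra_simps)
    hence "cmod (z 0 - \<i>) < cmod (z 0 + \<i>)"
      using power2_less_imp_less by fastforce
    thus ?thesis unfolding q_def using nz(2)[of 0] by (simp add: norm_divide divide_less_eq)
  qed
  have sm: "strict_mono (\<lambda>n::nat. (2::nat)^n)"
    by (simp add: strict_mono_def)
  have "(\<lambda>n. q 0 ^ n) \<longlonglongrightarrow> 0" using q1 by (rule LIMSEQ_power_zero)
  from LIMSEQ_subseq_LIMSEQ[OF this sm] have qt: "q \<longlonglongrightarrow> 0"
    by (simp add: o_def qp[symmetric])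
  have zq: "z n = \<i> * (1 + q n) / (1 - q n)" for n
  proof -
    have e1: "1 - q n = 2 * \<i> / (z n + \<i>)" unfolding q_def using nz(2)[of n]
      by (simp add: field_simps)
    have e2: "1 + q n = 2 * z n / (z n + \<i>)" unfolding q_def using nz(2)[of n]
      by (simp add: field_simps)
    show ?thesis unfolding e1 e2 using nz(2)[of n] by simp
  qed
  have "(\<lambda>n. \<i> * (1 + q n) / (1 - q n)) \<longlonglongrightarrow> \<i> * (1 + 0) / (1 - 0)"
    by (intro tendsto_intros qt) simp
  hence "z \<longlonglongrightarrow> \<i>" by (simp add: zq[symmetric])
  thus ?thesis using P by blast
qed

lemma newton_neg:
  fixes z :: "nat \<Rightarrow> complex"
  assumes step: "\<And>h. z (Suc h) = (z h - 1 / z h) / 2" and neg: "Im (z 0) < 0"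
  shows "(\<forall>n. z n \<noteq> 0) \<and> z \<longlonglongrightarrow> - \<i>"
proof -
  have "(\<forall>n. Im (cnj (z n)) > 0) \<and> (\<lambda>n. cnj (z n)) \<longlonglongrightarrow> \<i>"
  proof (rule newton_pos)
    show "cnj (z (Suc h)) = (cnj (z h) - 1 / cnj (z h)) / 2" for h
      by (simp add: step)
  qed (use neg in auto)
  then have a: "\<And>n. Im (cnj (z n)) > 0" and b: "(\<lambda>n. cnj (z n)) \<longlonglongrightarrow> \<i>" by auto
  from tendsto_cnj[OF b] have "z \<longlonglongrightarrow> - \<i>" by simp
  moreover have "z n \<noteq> 0" for n using a[of n] by auto
  ultimately show ?thesis by blast
qed

theorem mainTheorem5:
  fixes \<alpha> :: real and l :: complex and u w :: "nat \<Rightarrow> complex"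
  assumes alpha_pos: "\<alpha> > 0"
    and Im_ne: "Im l \<noteq> \<alpha>" "Im l \<noteq> - \<alpha>"
    and u0: "u 0 = complex_of_real \<alpha> * \<i> + l"
    and w0: "w 0 = complex_of_real \<alpha> * \<i> - l"
    and u_step: "\<And>h. u (Suc h) = (u h - 1 / u h) / 2"
    and w_step: "\<And>h. w (Suc h) = (w h - 1 / w h) / 2"
  shows "(\<forall>h. u h \<noteq> 0 \<and> w h \<noteq> 0)
    \<and> (\<bar>Im l\<bar> < \<alpha> \<longrightarrow> (\<lambda>h. u h + w h) \<longlonglongrightarrow> 2 * \<i>)
    \<and> (\<bar>Im l\<bar> > \<alpha> \<longrightarrow> (\<lambda>h. u h + w h) \<longlonglongrightarrow> 0)"
proof -
  have iu: "Im (u 0) = \<alpha> + Im l" and iw: "Im (w 0) = \<alpha> - Im l" using u0 w0 by simp_all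
  have U: "(\<forall>n. u n \<noteq> 0) \<and> (Im (u 0) > 0 \<longrightarrow> u \<longlonglongrightarrow> \<i>) \<and> (Im (u 0) < 0 \<longrightarrow> u \<longlonglongrightarrow> - \<i>)"
  proof (cases "Im (u 0) > 0")
    case True
    from newton_pos[OF u_step True] show ?thesis using True by (metis less_irrefl zero_complex.simps(2) less_asym)
  next
    case False
    hence "Im (u 0) < 0" using iu Im_ne by auto
    from newton_neg[OF u_step this] show ?thesis using False by force
  qed
  have W: "(\<forall>n. w n \<noteq> 0) \<and> (Im (w 0) > 0 \<longrightarrow> w \<longlonglongrightarrow> \<i>) \<and> (Im (w 0) < 0 \<longrightarrow> w \<longlonglongrightarrow> - \<i>)"
  proof (cases "Im (w 0) > 0")
    case True
    from newton_pos[OF w_step True] show ?thesis using True by (metis less_irrefl zero_complex.simps(2) less_asym)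
  next
    case False
    hence "Im (w 0) < 0" using iw Im_ne by auto
    from newton_neg[OF w_step this] show ?thesis using False by force
  qed
  have c1: "\<bar>Im l\<bar> < \<alpha> \<longrightarrow> (\<lambda>h. u h + w h) \<longlonglongrightarrow> 2 * \<i>"
  proof
    assume "\<bar>Im l\<bar> < \<alpha>"
    hence "u \<longlonglongrightarrow> \<i>" "w \<longlonglongrightarrow> \<i>" using U W iu iw by auto
    from tendsto_add[OF this] show "(\<lambda>h. u h + w h) \<longlonglongrightarrow> 2 * \<i>" by simp
  qed
  have c2: "\<bar>Im l\<bar> > \<alpha> \<longrightarrow> (\<lambda>h. u h + w h) \<longlonglongrightarrow> 0"
  proof
    assume h: "\<bar>Im l\<bar> > \<alpha>"
    show "(\<lambda>h. u h + w h) \<longlonglongrightarrow> 0"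
    proof (cases "Im l > 0")
      case True
      hence "u \<longlonglongrightarrow> \<i>" "w \<longlonglongrightarrow> - \<i>" using U W iu iw h alpha_pos by auto
      from tendsto_add[OF this] show ?thesis by simp
    next
      case False
      hence "u \<longlonglongrightarrow> - \<i>" "w \<longlonglongrightarrow> \<i>" using U W iu iw h alpha_pos by auto
      from tendsto_add[OF this] show ?thesis by simp
    qed
  qed
  show ?thesis using U W c1 c2 by blast
qed

end
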